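(* Let $f$ be a real function infinitely differentiable on a neighborhood of $0$, and write $c_i^f=f^{(i)}(0)$. Let $q$ be a positive integer and $w\in\mathbb{R}$. For $n\in\mathbb{N}_0$ put $u_n=\lfloor n/q\rfloor$ and $v_n=n \bmod q$, and define \[ a_n=\sum_{i=0}^{n}m_{n,i}\,c_i^f,\qquad m_{n,i}=\delta_{v_{n-i},0}\,\frac{(-1)^{u_{n-i}}\,w^{\llbracket u_{n-i}\rrbracket}}{(v_n+q\,u_i)!\;u_{n-i}!}. \] Then the function $\mathcal{A}^{f,D_1}(x)=\exp(wx^q)\sum_{n=0}^{\infty}a_nx^n$ matches all derivatives of $f$ at $0$; precisely, for every $N\in\mathbb{N}_0$, the function $x\mapsto\exp(wx^q)\sum_{n=0}^{N}a_nx^n$ satisfies \[ \frac{d^m}{dx^m}\Big[\exp(wx^q)\sum_{n=0}^{N}a_nx^n\Big]_{x=0}=f^{(m)}(0)\qquad\text{for all }0\le m\le N . \]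
   Context: $\delta_{j,0}$ is the Kronecker delta, $\lfloor\cdot\rfloor$ the floor function, and $n\bmod q$ the remainder of $n$ upon division by $q$. The generalized exponentiation is defined by $x^{\llbracket y\rrbracket}=1$ if $x=y=0$, and $x^{\llbracket y\rrbracket}=x^y$ otherwise (so in particular $0^{\llbracket 0\rrbracket}=1$, allowing $w=0$). *)

theory Defs
  imports "HOL-Analysis.Analysis"
begin

text \<open>Generalized exponentiation: x^[y] = 1 if x = y = 0, else x^y.
  For a natural-number exponent this coincides with HOL's power (0 ^ 0 = 1).\<close>
definition gen_pow :: "real \<Rightarrow> nat \<Rightarrow> real" where
  "gen_pow x y = (if x = 0 \<and> y = 0 then 1 else x ^ y)"

definition m_coef :: "nat \<Rightarrow> real \<Rightarrow> nat \<Rightarrow> nat \<Rightarrow> real" where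
  "m_coef q w n i =
     (if (n - i) mod q = 0 then 1 else 0) *
     ((-1) ^ ((n - i) div q) * gen_pow w ((n - i) div q)) /
     (fact (n mod q + q * (i div q)) * fact ((n - i) div q))"

definition a_coef :: "(real \<Rightarrow> real) \<Rightarrow> nat \<Rightarrow> real \<Rightarrow> nat \<Rightarrow> real" where
  "a_coef f q w n = (\<Sum>i=0..n. m_coef q w n i * (deriv ^^ i) f 0)"

end

theory Submission imports Defs "HOL-Analysis.FPS_Convergence" begin

lemma real_fps_deriv:
  fixes f :: "real \<Rightarrow> real"
  assumes "f has_fps_expansion F"
  shows "(deriv ^^ n) f 0 = fact n * fps_nth (F) n"
  using assms
proof (induction n arbitrary: f F)
  case 0
  then show ?case
    by (auto simp: has_fps_expansion_def eval_fps_at_0 dest: eventually_nhds_x_imp_x)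
next
  case (Suc n)
  have "(deriv ^^ Suc n) f 0 = (deriv ^^ n) (deriv f) 0"
    unfolding funpow_Suc_right o_def ..
  also have "\<dots> = fact n * fps_nth ((fps_deriv F)) n"
    using Suc.IH[OF has_fps_expansion_deriv[OF Suc.prems]] .
  finally show ?case by (simp add: algebra_simps)
qed

lemma fps_expansion_unique:
  fixes f :: "real \<Rightarrow> real"
  assumes "f has_fps_expansion F" "f has_fps_expansion G"
  shows "F = G"
proof (rule fps_ext)
  fix n
  show "fps_nth (F) n = fps_nth (G) n" using real_fps_deriv[OF assms(1), of n] real_fps_deriv[OF assms(2), of n]
    by simp
qed

definition Eq :: "nat \<Rightarrow> real \<Rightarrow> real fps" where
  "Eq q w = Abs_fps (\<lambda>n. if q dvd n then w ^ (n div q) / fact (n div q) else 0)"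

lemma Eq_sums:
  assumes q: "q > 0"
  shows "(\<lambda>n. fps_nth (Eq q w) n * x ^ n) sums exp (w * x ^ q)"
proof -
  have sm: "strict_mono (\<lambda>k. q * k)" using q by (simp add: strict_mono_def)
  have "(\<lambda>k. (w * x ^ q) ^ k /\<^sub>R fact k) sums exp (w * x ^ q)" by (rule exp_converges)
  also have "(\<lambda>k. (w * x ^ q) ^ k /\<^sub>R fact k) = (\<lambda>k. fps_nth (Eq q w) (q * k) * x ^ (q * k))"
    using q by (auto simp: Eq_def power_mult_distrib field_simps simp flip: power_mult intro!: ext)
  finally show ?thesis
    by (subst (asm) sums_mono_reindex[OF sm]) (auto simp: Eq_def)
qed

lemma Eq_expansion:
  assumes q: "q > 0"
  shows "(\<lambda>x. exp (w * x ^ q)) has_fps_expansion Eq q w"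
proof -
  have "fps_conv_radius (Eq q w) = \<infinity>"
    unfolding fps_conv_radius_def
    by (rule conv_radius_inftyI'') (use Eq_sums[OF q] in \<open>auto simp: sums_iff\<close>)
  moreover have "eval_fps (Eq q w) x = exp (w * x ^ q)" for x
    using Eq_sums[OF q, of w x] by (simp add: eval_fps_def sums_iff)
  ultimately show ?thesis by (simp add: has_fps_expansion_def)
qed

lemma Eq_inv:
  assumes q: "q > 0"
  shows "Eq q w * Eq q (-w) = 1"
proof -
  have "(\<lambda>x. exp (w * x ^ q) * exp (-w * x ^ q)) has_fps_expansion Eq q w * Eq q (-w)"
    by (intro has_fps_expansion_mult Eq_expansion q)
  moreover have "(\<lambda>x::real. exp (w * x ^ q) * exp (-w * x ^ q)) = (\<lambda>x. 1)"
    by (simp add: exp_minus[symmetric] exp_add[symmetric])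
  ultimately show ?thesis using fps_expansion_unique has_fps_expansion_1 by metis
qed

definition Cf :: "(real \<Rightarrow> real) \<Rightarrow> real fps" where
  "Cf f = Abs_fps (\<lambda>j. (deriv ^^ j) f 0 / fact j)"

lemma mod_aux:
  fixes n i q :: nat
  assumes "q dvd i" "i \<le> n"
  shows "n mod q + q * ((n - i) div q) = n - i"
proof -
  obtain t where t: "i = q * t" using assms by blast
  have "n = (n - i) + t * q" using assms t by simp
  hence "n mod q = (n - i) mod q" by (metis mod_mult_self1)
  thus ?thesis by (metis add.commute div_mult_mod_eq mult.commute)
qed

lemma a_coef_eq:
  shows "a_coef f q w n = fps_nth (Eq q (-w) * Cf f) n"
proof -
  have "a_coef f q w n = (\<Sum>i=0..n. m_coef q w n (n - i) * (deriv ^^ (n - i)) f 0)"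
    unfolding a_coef_def using sum.atLeastAtMost_rev[of "\<lambda>j. m_coef q w n j * (deriv ^^ j) f 0" 0 n]
    by simp
  also have "\<dots> = (\<Sum>i=0..n. fps_nth (Eq q (-w)) i * fps_nth (Cf f) (n - i))"
  proof (rule sum.cong[OF refl])
    fix i assume i: "i \<in> {0..n}"
    show "m_coef q w n (n - i) * (deriv ^^ (n - i)) f 0 = fps_nth (Eq q (-w)) i * fps_nth (Cf f) (n - i)"
    proof (cases "q dvd i")
      case True
      then show ?thesis using i mod_aux[OF True, of n]
        by (simp add: m_coef_def Eq_def Cf_def gen_pow_def power_minus_mult dvd_eq_mod_eq_0
              power_mult_distrib[symmetric] field_simps)
    next
      case False
      then show ?thesis using i
        by (simp add: m_coef_def Eq_def Cf_def dvd_eq_mod_eq_0)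
    qed
  qed
  also have "\<dots> = fps_nth (Eq q (-w) * Cf f) n" by (simp add: fps_mult_nth)
  finally show ?thesis .
qed

lemma mult_nth_cong:
  assumes "\<And>k. k \<le> m \<Longrightarrow> fps_nth A k = fps_nth B k"
  shows "fps_nth (E * A) m = fps_nth (E * B) m"
  using assms by (simp add: fps_mult_nth)

theorem proposition3:
  fixes f :: "real \<Rightarrow> real" and q N :: nat and w :: real
  assumes smooth: "\<exists>e>0. \<forall>k. \<forall>x\<in>ball 0 e. (deriv ^^ k) f differentiable (at x)"
    and q: "q > 0"
  shows "\<forall>m\<le>N. (deriv ^^ m) (\<lambda>x. exp (w * x ^ q) * (\<Sum>n=0..N. a_coef f q w n * x ^ n)) 0
                 = (deriv ^^ m) f 0"
proof (intro allI impI)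
  fix m assume m: "m \<le> N"
  define A where "A = (\<Sum>n=0..N. fps_const (a_coef f q w n) * fps_X ^ n)"
  have exp: "(\<lambda>x. exp (w * x ^ q) * (\<Sum>n=0..N. a_coef f q w n * x ^ n)) has_fps_expansion Eq q w * A"
    unfolding A_def
    by (intro has_fps_expansion_mult Eq_expansion q has_fps_expansion_sum
        has_fps_expansion_cmult_left has_fps_expansion_fps_X_power)
  have An: "fps_nth A k = a_coef f q w k" if "k \<le> N" for k
    using that by (simp add: A_def fps_sum_nth if_distrib[of "\<lambda>x. _ * x"] cong: if_cong)
  have "fps_nth (Eq q w * A) m = fps_nth (Eq q w * (Eq q (-w) * Cf f)) m"
    by (rule mult_nth_cong) (use m An a_coef_eq in auto)
  also have "\<dots> = fps_nth (Cf f) m" by (simp add: mult.assoc[symmetric] Eq_inv[OF q])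
  finally show "(deriv ^^ m) (\<lambda>x. exp (w * x ^ q) * (\<Sum>n=0..N. a_coef f q w n * x ^ n)) 0
                 = (deriv ^^ m) f 0"
    using real_fps_deriv[OF exp, of m] by (simp add: Cf_def)
qed

end
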